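(* In the changepoint model of the context, for $0<i<n$ and $0\le j\le i$, $$\big(X_i\mid C_i=j,\,C_{i+1}=i+1,\,Y_{1:n}=y_{1:n}\big)\sim H_{ji},$$ and for $i=n$, $(X_n\mid C_n=j,\,Y_{1:n}=y_{1:n})\sim H_{jn}$.
   Context: Model: Let $n\ge 1$ and fix observed data $y_1,\dots,y_n$. Let $(\mathbb X,\mathcal X)$, $(\mathbb Y,\mathcal Y)$ be standard Borel spaces, $\psi$ a $\sigma$-finite measure on $(\mathbb Y,\mathcal Y)$, $\mathcal J$ a probability measure on $(\mathbb X,\mathcal X)$, and $q_{ji}\in[0,1]$ for $0\le j<i\le n$. The model consists of random variables $C_i\in\{0,\dots,i\}$, $X_i\in\mathbb X$, $Y_i\in\mathbb Y$, $i=1,\dots,n$, with joint law factorizing as: $P(C_1=0)=q_{01}$, $P(C_1=1)=1-q_{01}$; for $i\ge2$, $C_i$ depends on the past only through $C_{i-1}$, with $P(C_i=j\mid C_{i-1}=j)=q_{ji}$ and $P(C_i=i\mid C_{i-1}=j)=1-q_{ji}$ ($0\le j\le i-1$); $X_1\sim\mathcal J$ independent of $C_1$; for $i\ge 2$, $X_i$ depends on the past only through $(C_i,X_{i-1})$, with $X_i\sim\mathcal J$ if $C_i=i$ and $X_i=X_{i-1}$ if $C_i<i$; $Y_i$ depends on all other variables only through $X_i$, with density $p(Y_i=y\mid X_i=x)$ w.r.t. $\psi$. Assume $\int\prod_{\ell=j}^i p(Y_\ell=y_\ell\mid X_\ell=x)\,\mathcal J(dx)>0$ for all $0<j\le i\le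 n$. $Y_{a:b}=y_{a:b}$ abbreviates $Y_a=y_a,\dots,Y_b=y_b$. Notation: $H_{ji}=P(X_i\in\cdot\mid C_i=j,Y_{1:i}=y_{1:i})$. *)

theory Defs
  imports "HOL-Probability.Probability"
begin

text \<open>The changepoint path C_1..C_n is built as a Markov chain
by iterated binds: at time 1, C_1 = 0 with probability q 0 1, else C_1 = 1; at time
i+1 >= 2, C_(i+1) = C_i with probability q (C_i) (i+1), else C_(i+1) = i+1.
Entries of the path outside 1..n are 0.\<close>

primrec cp_path :: "(nat \<Rightarrow> nat \<Rightarrow> real) \<Rightarrow> nat \<Rightarrow> (nat \<Rightarrow> nat) pmf" where
  "cp_path q 0 = return_pmf (\<lambda>_. 0)"
| "cp_path q (Suc i) = bind_pmf (cp_path q i)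
     (\<lambda>c. map_pmf
        (\<lambda>b. c(Suc i := (if b then (if i = 0 then 0 else c i) else Suc i)))
        (bernoulli_pmf (q (if i = 0 then 0 else c i) (Suc i))))"

text \<open>Joint law of the changepoint path and of n independent fresh draws Z_1..Z_n from J.
The latent state is X_i = Z_(max 1 C_i): a fresh draw at each changepoint (C_i = i),
X_1 = Z_1, and X_i = X_(i-1) otherwise.\<close>

definition cp_model :: "(nat \<Rightarrow> nat \<Rightarrow> real) \<Rightarrow> 'x measure \<Rightarrow> nat
    \<Rightarrow> ((nat \<Rightarrow> nat) \<times> (nat \<Rightarrow> 'x)) measure" where
  "cp_model q J n = measure_pmf (cp_path q n) \<Otimes>\<^sub>M PiM {1..n} (\<lambda>_. J)"

definition cpC :: "nat \<Rightarrow> (nat \<Rightarrow> nat) \<times> (nat \<Rightarrow> 'x) \<Rightarrow> nat" where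
  "cpC i \<omega> = fst \<omega> i"

definition cpX :: "nat \<Rightarrow> (nat \<Rightarrow> nat) \<times> (nat \<Rightarrow> 'x) \<Rightarrow> 'x" where
  "cpX i \<omega> = snd \<omega> (max 1 (fst \<omega> i))"

definition cp_lik :: "('x \<Rightarrow> 'y \<Rightarrow> real) \<Rightarrow> (nat \<Rightarrow> 'y) \<Rightarrow> nat
    \<Rightarrow> (nat \<Rightarrow> nat) \<times> (nat \<Rightarrow> 'x) \<Rightarrow> ennreal" where
  "cp_lik p y m \<omega> = (\<Prod>l\<in>{1..m}. ennreal (p (cpX l \<omega>) (y l)))"

text \<open>Posterior probability P(B | E, Y_(1:m) = y_(1:m)) given by Bayes' formula
(conditioning on the observations via their density).\<close>

definition cp_post :: "'a measure \<Rightarrow> ('a \<Rightarrow> ennreal) \<Rightarrow> 'a set \<Rightarrow> 'a set \<Rightarrow> ennreal" where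
  "cp_post M L E B =
     (\<integral>\<^sup>+\<omega>. indicator (E \<inter> B) \<omega> * L \<omega> \<partial>M) / (\<integral>\<^sup>+\<omega>. indicator E \<omega> * L \<omega> \<partial>M)"

end

theory Submission
  imports Defs
begin
definition cstep :: "(nat \<Rightarrow> nat \<Rightarrow> real) \<Rightarrow> nat \<Rightarrow> (nat \<Rightarrow> nat) \<Rightarrow> (nat \<Rightarrow> nat) pmf" where
  "cstep q k c = map_pmf (\<lambda>b. c(Suc k := (if b then (if k = 0 then 0 else c k) else Suc k)))
        (bernoulli_pmf (q (if k = 0 then 0 else c k) (Suc k)))"

primrec cext :: "(nat \<Rightarrow> nat \<Rightarrow> real) \<Rightarrow> nat \<Rightarrow> nat \<Rightarrow> (nat \<Rightarrow> nat) \<Rightarrow> (nat \<Rightarrow> nat) pmf" where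
  "cext q k 0 c = return_pmf c"
| "cext q k (Suc d) c = bind_pmf (cext q k d c) (cstep q (k + d))"

lemma cp_path_Suc': "cp_path q (Suc k) = bind_pmf (cp_path q k) (cstep q k)"
  unfolding cstep_def[abs_def] by simp

lemma cp_path_add: "cp_path q (k + d) = bind_pmf (cp_path q k) (cext q k d)"
proof (induction d)
  case 0 then show ?case by (simp add: bind_return_pmf')
next
  case (Suc d)
  have "cp_path q (k + Suc d) = bind_pmf (cp_path q (k + d)) (cstep q (k + d))"
    by (simp only: add_Suc_right cp_path_Suc')
  also have "\<dots> = bind_pmf (cp_path q k) (\<lambda>c. bind_pmf (cext q k d c) (cstep q (k + d)))"
    by (simp add: Suc bind_assoc_pmf)
  also have "(\<lambda>c. bind_pmf (cext q k d c) (cstep q (k + d))) = cext q k (Suc d)"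
    by (simp add: fun_eq_iff)
  finally show ?case .
qed

lemma set_cstep: "c' \<in> set_pmf (cstep q k c) \<Longrightarrow>
   c' = c(Suc k := (if k = 0 then 0 else c k)) \<or> c' = c(Suc k := Suc k)"
  by (auto simp: cstep_def)

lemma set_cext: "c'' \<in> set_pmf (cext q k d c) \<Longrightarrow>
   (\<forall>l. l \<le> k \<or> k + d < l \<longrightarrow> c'' l = c l) \<and>
   (\<forall>l. k \<le> l \<and> l < k + d \<longrightarrow> c'' (Suc l) = (if l = 0 then 0 else c'' l) \<or> c'' (Suc l) = Suc l)"
proof (induction d arbitrary: c'')
  case 0 then show ?case by simp
next
  case (Suc d)
  then obtain c1 where c1: "c1 \<in> set_pmf (cext q k d c)" "c'' \<in> set_pmf (cstep q (k + d) c1)"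
    using Suc.prems unfolding cext.simps set_bind_pmf by blast
  from Suc.IH[OF c1(1)] have IH1: "\<And>l. l \<le> k \<or> k + d < l \<Longrightarrow> c1 l = c l"
    and IH2: "\<And>l. k \<le> l \<and> l < k + d \<Longrightarrow> c1 (Suc l) = (if l = 0 then 0 else c1 l) \<or> c1 (Suc l) = Suc l"
    by blast+
  from set_cstep[OF c1(2)] obtain v where S: "c'' = c1(Suc (k+d) := v)"
     and v: "v = (if k + d = 0 then 0 else c1 (k+d)) \<or> v = Suc (k+d)" by blast
  show ?case
  proof (intro conjI allI impI)
    fix l assume l: "l \<le> k \<or> k + Suc d < l"
    then have "l \<noteq> Suc (k+d)" by auto
    then have "c'' l = c1 l" using S by simp
    also have "c1 l = c l" using l by (intro IH1) auto
    finally show "c'' l = c l" .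
  next
    fix l assume l: "k \<le> l \<and> l < k + Suc d"
    show "c'' (Suc l) = (if l = 0 then 0 else c'' l) \<or> c'' (Suc l) = Suc l"
    proof (cases "l = k + d")
      case True
      then have e1: "c'' (Suc l) = v" and e2: "c'' l = c1 l" using S by simp_all
      have e: "(if l = 0 then 0 else c'' l) = (if k + d = 0 then 0 else c1 (k + d))"
        using e2 True by simp
      show ?thesis using v e e1 True by metis
    next
      case False
      then have "l < k + d" using l by simp
      then have e1: "c'' (Suc l) = c1 (Suc l)" and e2: "c'' l = c1 l" using S by simp_all
      have "c1 (Suc l) = (if l = 0 then 0 else c1 l) \<or> c1 (Suc l) = Suc l"
        using IH2[of l] l \<open>l < k + d\<close> by blast
      then show ?thesis by (simp only: e1 e2)
    qed
  qed
qed

lemma set_cp_path: "c \<in> set_pmf (cp_path q m) \<Longrightarrow>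
   c 0 = 0 \<and> (\<forall>l<m. c (Suc l) = c l \<or> c (Suc l) = Suc l) \<and> (\<forall>l>m. c l = 0)"
proof (induction m arbitrary: c)
  case 0 then show ?case by simp
next
  case (Suc m)
  then obtain c1 where c1: "c1 \<in> set_pmf (cp_path q m)" "c \<in> set_pmf (cstep q m c1)"
    unfolding cp_path_Suc' set_bind_pmf by blast
  from Suc.IH[OF c1(1)] have IH1: "c1 0 = 0" and IH2: "\<And>l. l<m \<Longrightarrow> c1 (Suc l) = c1 l \<or> c1 (Suc l) = Suc l"
    and IH3: "\<And>l. l>m \<Longrightarrow> c1 l = 0"
    by blast+
  from set_cstep[OF c1(2)] obtain v where S: "c = c1(Suc m := v)"
     and v: "v = (if m = 0 then 0 else c1 m) \<or> v = Suc m" by blast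
  show ?case
  proof (intro conjI allI impI)
    show "c 0 = 0" using S IH1 by simp
  next
    fix l assume "l < Suc m"
    show "c (Suc l) = c l \<or> c (Suc l) = Suc l"
    proof (cases "l = m")
      case True
      then have "c (Suc l) = v" "c l = c1 l" using S by simp_all
      then show ?thesis using v True IH1 by (cases "m = 0") simp_all
    next
      case False
      with \<open>l < Suc m\<close> have "l < m" by simp
      then have "c1 (Suc l) = c1 l \<or> c1 (Suc l) = Suc l" using IH2 by blast
      moreover have "c (Suc l) = c1 (Suc l)" "c l = c1 l" using S \<open>l < m\<close> by simp_all
      ultimately show ?thesis by simp
    qed
  next
    fix l assume "Suc m < l"
    then have "c l = c1 l" "m < l" using S by simp_all
    then show "c l = 0" using IH3 by simp
  qed
qed

lemma cp_path_le: "c \<in> set_pmf (cp_path q m) \<Longrightarrow> c l \<le> l"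
proof -
  assume c: "c \<in> set_pmf (cp_path q m)"
  note S = set_cp_path[OF c]
  show ?thesis
  proof (induction l)
    case 0 then show ?case using S by simp
  next
    case (Suc l)
    show ?case
    proof (cases "l < m")
      case True
      then have "c (Suc l) = c l \<or> c (Suc l) = Suc l" using S by blast
      then show ?thesis using Suc by auto
    next
      case False then have "c (Suc l) = 0" using S by auto
      then show ?thesis by simp
    qed
  qed
qed

lemma cp_path_mono: "c \<in> set_pmf (cp_path q m) \<Longrightarrow> a \<le> b \<Longrightarrow> b \<le> m \<Longrightarrow> c a \<le> c b"
proof -
  assume c: "c \<in> set_pmf (cp_path q m)" and ab: "a \<le> b" "b \<le> m"
  note S = set_cp_path[OF c]
  have le: "c l \<le> l" for l using cp_path_le[OF c] .
  show ?thesis using ab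
  proof (induction b rule: dec_induct)
    case base then show ?case by simp
  next
    case (step b)
    then have "b < m" by simp
    then have "c (Suc b) = c b \<or> c (Suc b) = Suc b" using S by blast
    then show ?case using step le[of b] by auto
  qed
qed

definition hh :: "nat \<Rightarrow> nat \<Rightarrow> (nat \<Rightarrow> nat) \<Rightarrow> (nat \<Rightarrow> nat) \<Rightarrow> (nat \<Rightarrow> nat)" where
  "hh k d c1 c'' = (\<lambda>l. if k < l \<and> l \<le> k + d then c'' l else c1 l)"

lemma cext_map:
  assumes "c1 k = c2 k"
  shows "cext q k d c1 = map_pmf (hh k d c1) (cext q k d c2)"
proof (induction d)
  case 0 then show ?case by (simp add: hh_def fun_eq_iff)
next
  case (Suc d)
  have "cext q k (Suc d) c1 = bind_pmf (map_pmf (hh k d c1) (cext q k d c2)) (cstep q (k + d))"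
    by (simp add: Suc)
  also have "\<dots> = bind_pmf (cext q k d c2) (\<lambda>c''. cstep q (k + d) (hh k d c1 c''))"
    by (simp add: bind_map_pmf)
  also have "\<dots> = bind_pmf (cext q k d c2) (\<lambda>c''. map_pmf (hh k (Suc d) c1) (cstep q (k + d) c''))"
  proof (rule bind_pmf_cong[OF refl])
    fix c'' assume c'': "c'' \<in> set_pmf (cext q k d c2)"
    have kk: "c'' k = c2 k" using set_cext[OF c''] by simp
    have rd: "(if k + d = 0 then 0 else hh k d c1 c'' (k + d)) = (if k + d = 0 then 0 else c'' (k + d))"
    proof (cases "d = 0")
      case True then show ?thesis using kk assms by (simp add: hh_def)
    next
      case False then show ?thesis by (simp add: hh_def)
    qed
    have up: "hh k (Suc d) c1 (c''(Suc (k + d) := v)) = (hh k d c1 c'')(Suc (k + d) := v)" for v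
      by (auto simp: hh_def fun_eq_iff)
    show "cstep q (k + d) (hh k d c1 c'') = map_pmf (hh k (Suc d) c1) (cstep q (k + d) c'')"
      unfolding cstep_def rd map_pmf_comp
      by (rule map_pmf_cong[OF refl]) (simp add: up rd)
  qed
  also have "\<dots> = map_pmf (hh k (Suc d) c1) (cext q k (Suc d) c2)"
    by (simp add: map_bind_pmf)
  finally show ?case .
qed

lemma nn_integral_pmf_const_on_support:
  fixes f :: "'a \<Rightarrow> ennreal"
  assumes "\<And>x. x \<in> set_pmf M \<Longrightarrow> f x = c"
  shows "(\<integral>\<^sup>+x. f x \<partial>measure_pmf M) = c"
proof -
  have "(\<integral>\<^sup>+x. f x \<partial>measure_pmf M) = (\<integral>\<^sup>+x. c \<partial>measure_pmf M)"
    by (rule nn_integral_cong_AE) (simp add: AE_measure_pmf_iff assms)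
  also have "\<dots> = c" by (simp add: measure_pmf.emeasure_space_1)
  finally show ?thesis .
qed

lemma lemmaR:
  fixes G :: "(nat \<Rightarrow> nat) \<Rightarrow> ennreal"
  assumes "i \<le> n" and G: "\<And>c c'. (\<forall>l\<le>i. c l = c' l) \<Longrightarrow> G c = G c'"
  shows "(\<integral>\<^sup>+c. G c \<partial>measure_pmf (cp_path q n)) = (\<integral>\<^sup>+c. G c \<partial>measure_pmf (cp_path q i))"
proof -
  have n: "n = i + (n - i)" using assms by simp
  have "(\<integral>\<^sup>+c. G c \<partial>measure_pmf (cp_path q n))
      = (\<integral>\<^sup>+c. G c \<partial>measure_pmf (bind_pmf (cp_path q i) (cext q i (n - i))))"
    by (subst n, subst cp_path_add) simp
  also have "\<dots> = (\<integral>\<^sup>+c. (\<integral>\<^sup>+c''. G c'' \<partial>measure_pmf (cext q i (n - i) c)) \<partial>measure_pmf (cp_path q i))"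
    by simp
  also have "\<dots> = (\<integral>\<^sup>+c. G c \<partial>measure_pmf (cp_path q i))"
  proof (rule nn_integral_cong)
    fix c
    show "(\<integral>\<^sup>+c''. G c'' \<partial>measure_pmf (cext q i (n - i) c)) = G c"
      by (rule nn_integral_pmf_const_on_support, rule G) (use set_cext in blast)
  qed
  finally show ?thesis .
qed

lemma bern_false_integral:
  fixes a :: ennreal
  assumes "0 \<le> p" "p \<le> 1"
  shows "(\<integral>\<^sup>+b. (if b then 0 else a) \<partial>measure_pmf (bernoulli_pmf p)) = a * ennreal (1 - p)"
proof -
  have "(\<integral>\<^sup>+b. (if b then 0 else a) \<partial>measure_pmf (bernoulli_pmf p))
     = (\<integral>\<^sup>+b. a * indicator {False} b \<partial>measure_pmf (bernoulli_pmf p))"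
    by (rule nn_integral_cong) (auto simp: indicator_def)
  also have "\<dots> = a * emeasure (measure_pmf (bernoulli_pmf p)) {False}"
    by (simp add: nn_integral_cmult_indicator)
  also have "\<dots> = a * ennreal (1 - p)"
    using assms by (simp add: emeasure_pmf_single)
  finally show ?thesis .
qed

definition T0 :: "(nat \<Rightarrow> nat \<Rightarrow> real) \<Rightarrow> nat \<Rightarrow> nat \<Rightarrow> ((nat \<Rightarrow> nat) \<Rightarrow> ennreal) \<Rightarrow> ennreal" where
  "T0 q i n K = (\<integral>\<^sup>+c. K c \<partial>measure_pmf (cext q (Suc i) (n - Suc i) (\<lambda>_. Suc i)))"

lemma T0_eq:
  assumes "i < n" and K: "\<And>c c'. (\<forall>l\<in>{Suc i..n}. c l = c' l) \<Longrightarrow> K c = K c'"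
    and c': "c' (Suc i) = Suc i"
  shows "(\<integral>\<^sup>+c. K c \<partial>measure_pmf (cext q (Suc i) (n - Suc i) c')) = T0 q i n K"
proof -
  let ?d = "n - Suc i"
  have "cext q (Suc i) ?d c' = map_pmf (hh (Suc i) ?d c') (cext q (Suc i) ?d (\<lambda>_. Suc i))"
    by (rule cext_map) (simp add: c')
  then have "(\<integral>\<^sup>+c. K c \<partial>measure_pmf (cext q (Suc i) ?d c'))
     = (\<integral>\<^sup>+c. K (hh (Suc i) ?d c' c) \<partial>measure_pmf (cext q (Suc i) ?d (\<lambda>_. Suc i)))"
    by simp
  also have "\<dots> = T0 q i n K"
    unfolding T0_def
  proof (rule nn_integral_cong_AE, unfold AE_measure_pmf_iff, intro ballI)
    fix c assume c: "c \<in> set_pmf (cext q (Suc i) ?d (\<lambda>_. Suc i))"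
    have "c (Suc i) = Suc i" using set_cext[OF c] by simp
    then show "K (hh (Suc i) ?d c' c) = K c"
      using assms(1) by (intro K) (auto simp: hh_def c')
  qed
  finally show ?thesis .
qed

lemma lemmaM:
  fixes Phi K :: "(nat \<Rightarrow> nat) \<Rightarrow> ennreal"
  assumes i: "0 < i" "i < n" and j: "j \<le> i" and qr: "0 \<le> q j (Suc i)" "q j (Suc i) \<le> 1"
    and Phi: "\<And>c c'. (\<forall>l\<le>i. c l = c' l) \<Longrightarrow> Phi c = Phi c'"
    and K: "\<And>c c'. (\<forall>l\<in>{Suc i..n}. c l = c' l) \<Longrightarrow> K c = K c'"
  shows "(\<integral>\<^sup>+c. indicator {c. c i = j \<and> c (Suc i) = Suc i} c * Phi c * K c \<partial>measure_pmf (cp_path q n))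
     = ennreal (1 - q j (Suc i)) * T0 q i n K * (\<integral>\<^sup>+c. indicator {c. c i = j} c * Phi c \<partial>measure_pmf (cp_path q i))"
proof -
  let ?d = "n - Suc i"
  let ?F = "\<lambda>c. indicator {c. c i = j \<and> c (Suc i) = Suc i} c * Phi c * K c"
  let ?G = "\<lambda>c. indicator {c. c i = j \<and> c (Suc i) = Suc i} c * Phi c * T0 q i n K"
  have n: "n = Suc i + ?d" using i by simp
  have "(\<integral>\<^sup>+c. ?F c \<partial>measure_pmf (cp_path q n))
      = (\<integral>\<^sup>+c. ?F c \<partial>measure_pmf (bind_pmf (cp_path q (Suc i)) (cext q (Suc i) ?d)))"
    by (subst n, subst cp_path_add) simp
  also have "\<dots> = (\<integral>\<^sup>+c'. (\<integral>\<^sup>+c. ?F c \<partial>measure_pmf (cext q (Suc i) ?d c')) \<partial>measure_pmf (cp_path q (Suc i)))"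
    by simp
  also have "\<dots> = (\<integral>\<^sup>+c'. ?G c' \<partial>measure_pmf (cp_path q (Suc i)))"
  proof (rule nn_integral_cong)
    fix c'
    have "(\<integral>\<^sup>+c. ?F c \<partial>measure_pmf (cext q (Suc i) ?d c'))
        = (\<integral>\<^sup>+c. indicator {c. c i = j \<and> c (Suc i) = Suc i} c' * Phi c' * K c \<partial>measure_pmf (cext q (Suc i) ?d c'))"
    proof (rule nn_integral_cong_AE, unfold AE_measure_pmf_iff, intro ballI)
      fix c assume c: "c \<in> set_pmf (cext q (Suc i) ?d c')"
      have agree: "\<forall>l\<le>Suc i. c l = c' l" using set_cext[OF c] by simp
      then have "Phi c = Phi c'" by (intro Phi) simp
      moreover have "c i = c' i" "c (Suc i) = c' (Suc i)" using agree by simp_all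
      ultimately show "?F c = indicator {c. c i = j \<and> c (Suc i) = Suc i} c' * Phi c' * K c"
        by (simp add: indicator_def)
    qed
    also have "\<dots> = indicator {c. c i = j \<and> c (Suc i) = Suc i} c' * Phi c' * (\<integral>\<^sup>+c. K c \<partial>measure_pmf (cext q (Suc i) ?d c'))"
      by (simp add: nn_integral_cmult)
    also have "\<dots> = ?G c'"
    proof (cases "c' (Suc i) = Suc i")
      case True
      then show ?thesis using T0_eq[of i n K c' q, OF i(2) K True] by simp
    next
      case False then show ?thesis by simp
    qed
    finally show "(\<integral>\<^sup>+c. ?F c \<partial>measure_pmf (cext q (Suc i) ?d c')) = ?G c'" .
  qed
  also have "\<dots> = (\<integral>\<^sup>+c. (\<integral>\<^sup>+c'. ?G c' \<partial>measure_pmf (cstep q i c)) \<partial>measure_pmf (cp_path q i))"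
    by (simp only: cp_path_Suc' nn_integral_bind_pmf)
  also have "\<dots> = (\<integral>\<^sup>+c. indicator {c. c i = j} c * Phi c * T0 q i n K * ennreal (1 - q j (Suc i)) \<partial>measure_pmf (cp_path q i))"
  proof (rule nn_integral_cong)
    fix c
    have "(\<integral>\<^sup>+c'. ?G c' \<partial>measure_pmf (cstep q i c))
       = (\<integral>\<^sup>+b. ?G (c(Suc i := if b then c i else Suc i)) \<partial>measure_pmf (bernoulli_pmf (q (c i) (Suc i))))"
      using i by (simp add: cstep_def)
    also have "\<dots> = indicator {c. c i = j} c * Phi c * T0 q i n K * ennreal (1 - q j (Suc i))"
    proof (cases "c i = j")
      case True
      have ph: "Phi (c(Suc i := v)) = Phi c" for v by (intro Phi) simp
      have "(\<integral>\<^sup>+b. ?G (c(Suc i := if b then c i else Suc i)) \<partial>measure_pmf (bernoulli_pmf (q (c i) (Suc i))))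
          = (\<integral>\<^sup>+b. (if b then 0 else Phi c * T0 q i n K) \<partial>measure_pmf (bernoulli_pmf (q j (Suc i))))"
        unfolding True[symmetric] using True j by (intro nn_integral_cong) (auto simp: ph indicator_def)
      also have "\<dots> = Phi c * T0 q i n K * ennreal (1 - q j (Suc i))"
        using qr by (rule bern_false_integral)
      finally show ?thesis using True by simp
    next
      case False then show ?thesis by (simp add: indicator_def)
    qed
    finally show "(\<integral>\<^sup>+c'. ?G c' \<partial>measure_pmf (cstep q i c))
       = indicator {c. c i = j} c * Phi c * T0 q i n K * ennreal (1 - q j (Suc i))" .
  qed
  also have "\<dots> = ennreal (1 - q j (Suc i)) * T0 q i n K * (\<integral>\<^sup>+c. indicator {c. c i = j} c * Phi c \<partial>measure_pmf (cp_path q i))"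
    by (subst nn_integral_cmult[symmetric]) (simp_all add: mult_ac)
  finally show ?thesis .
qed

lemma group_prod:
  fixes J :: "'x measure" and h :: "'x \<Rightarrow> ennreal" and f :: "nat \<Rightarrow> 'x \<Rightarrow> ennreal"
  assumes J: "prob_space J" and I: "finite I" "k0 \<in> I" and S: "finite S" "\<forall>l\<in>S. \<sigma> l \<in> I"
    and hm: "h \<in> borel_measurable J" and fm: "\<And>l. f l \<in> borel_measurable J"
  shows "(\<integral>\<^sup>+z. h (z k0) * (\<Prod>l\<in>S. f l (z (\<sigma> l))) \<partial>PiM I (\<lambda>_. J))
       = (\<Prod>k\<in>I. \<integral>\<^sup>+x. (if k = k0 then h x else 1) * (\<Prod>l\<in>{l\<in>S. \<sigma> l = k}. f l x) \<partial>J)"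
proof -
  interpret PS: product_sigma_finite "\<lambda>_. J"
    unfolding product_sigma_finite_def using J by (simp add: prob_space_imp_sigma_finite)
  have eq: "h (z k0) * (\<Prod>l\<in>S. f l (z (\<sigma> l)))
      = (\<Prod>k\<in>I. (if k = k0 then h (z k) else 1) * (\<Prod>l\<in>{l\<in>S. \<sigma> l = k}. f l (z k)))" for z
  proof -
    have "(\<Prod>k\<in>I. (if k = k0 then h (z k) else 1) * (\<Prod>l\<in>{l\<in>S. \<sigma> l = k}. f l (z k)))
        = (\<Prod>k\<in>I. (if k = k0 then h (z k) else 1)) * (\<Prod>k\<in>I. \<Prod>l\<in>{l\<in>S. \<sigma> l = k}. f l (z k))"
      by (rule prod.distrib)
    also have "(\<Prod>k\<in>I. (if k = k0 then h (z k) else 1)) = h (z k0)"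
      using I by simp
    also have "(\<Prod>k\<in>I. \<Prod>l\<in>{l\<in>S. \<sigma> l = k}. f l (z k)) = (\<Prod>k\<in>I. \<Prod>l\<in>{l\<in>S. \<sigma> l = k}. f l (z (\<sigma> l)))"
      by (intro prod.cong refl) simp
    also have "\<dots> = (\<Prod>l\<in>S. f l (z (\<sigma> l)))"
      by (rule prod.group) (use I S in auto)
    finally show ?thesis by simp
  qed
  have "(\<integral>\<^sup>+z. h (z k0) * (\<Prod>l\<in>S. f l (z (\<sigma> l))) \<partial>PiM I (\<lambda>_. J))
     = (\<integral>\<^sup>+z. (\<Prod>k\<in>I. (\<lambda>k x. (if k = k0 then h x else 1) * (\<Prod>l\<in>{l\<in>S. \<sigma> l = k}. f l x)) k (z k)) \<partial>PiM I (\<lambda>_. J))"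
    by (simp only: eq)
  also have "\<dots> = (\<Prod>k\<in>I. \<integral>\<^sup>+x. (if k = k0 then h x else 1) * (\<Prod>l\<in>{l\<in>S. \<sigma> l = k}. f l x) \<partial>J)"
  proof (rule PS.product_nn_integral_prod[OF I(1)])
    fix k assume "k \<in> I"
    show "(\<lambda>x. (if k = k0 then h x else 1) * (\<Prod>l\<in>{l\<in>S. \<sigma> l = k}. f l x)) \<in> borel_measurable J"
    proof -
      note [measurable] = hm fm
      show ?thesis by measurable
    qed
  qed
  finally show ?thesis .
qed

locale cpm =
  fixes J :: "'x measure" and p :: "'x \<Rightarrow> 'y \<Rightarrow> real" and y :: "nat \<Rightarrow> 'y" and n :: nat
  assumes Jp: "prob_space J" and Jsp: "space J = UNIV"
    and pm: "\<And>v. (\<lambda>x. p x v) \<in> borel_measurable J"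
begin

abbreviation PI where "PI \<equiv> PiM {1..n} (\<lambda>_. J)"

definition Phi :: "nat \<Rightarrow> nat \<Rightarrow> 'x set \<Rightarrow> (nat \<Rightarrow> nat) \<Rightarrow> ennreal" where
  "Phi i m A c = (\<integral>\<^sup>+z. indicator A (z (max 1 (c i))) * (\<Prod>l\<in>{1..m}. ennreal (p (z (max 1 (c l))) (y l))) \<partial>PI)"

definition Kf :: "nat \<Rightarrow> (nat \<Rightarrow> nat) \<Rightarrow> ennreal" where
  "Kf i c = (\<Prod>k\<in>{1..n}. \<integral>\<^sup>+x. (\<Prod>l\<in>{l\<in>{Suc i..n}. max 1 (c l) = k}. ennreal (p x (y l))) \<partial>J)"

lemma fm: "(\<lambda>x. ennreal (p x v)) \<in> borel_measurable J"
  using pm[of v] by measurable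

lemma int1: "(\<integral>\<^sup>+x. 1 \<partial>J) = 1"
  using prob_space.emeasure_space_1[OF Jp] by simp

lemma Phi_dep: "(\<forall>l\<le>i. c l = c' l) \<Longrightarrow> Phi i i A c = Phi i i A c'"
proof -
  assume a: "\<forall>l\<le>i. c l = c' l"
  have "(\<Prod>l\<in>{1..i}. ennreal (p (z (max 1 (c l))) (y l))) = (\<Prod>l\<in>{1..i}. ennreal (p (z (max 1 (c' l))) (y l)))" for z
    using a by (intro prod.cong refl) simp
  moreover have "c i = c' i" using a by simp
  ultimately show ?thesis unfolding Phi_def by simp
qed

lemma Kf_dep: "(\<forall>l\<in>{Suc i..n}. c l = c' l) \<Longrightarrow> Kf i c = Kf i c'"
proof -
  assume a: "\<forall>l\<in>{Suc i..n}. c l = c' l"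
  have "{l\<in>{Suc i..n}. max 1 (c l) = k} = {l\<in>{Suc i..n}. max 1 (c' l) = k}" for k
    using a by (intro Collect_cong) (metis atLeastAtMost_iff)
  then show ?thesis unfolding Kf_def by simp
qed

lemma Fac:
  assumes c: "c \<in> set_pmf (cp_path q n)" and i: "0 < i" "i < n" and ci: "c (Suc i) = Suc i"
    and A: "A \<in> sets J"
  shows "Phi i n A c = Phi i i A c * Kf i c"
proof -
  let ?s = "\<lambda>l. max 1 (c l)"
  let ?f = "\<lambda>l x. ennreal (p x (y l))"
  let ?k0 = "?s i"
  have hm: "indicator A \<in> borel_measurable J" using A by simp
  have cle: "c l \<le> l" for l using cp_path_le[OF c] .
  have k0: "?k0 \<in> {1..n}" using cle[of i] i by auto
  have sI: "\<forall>l\<in>{1..m}. ?s l \<in> {1..n}" if "m \<le> n" for m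
  proof
    fix l assume "l \<in> {1..m}"
    then have "l \<le> n" "1 \<le> l" using that by auto
    then show "?s l \<in> {1..n}" using cle[of l] by simp
  qed
  have low: "?s l \<le> i" if "l \<le> i" for l using cle[of l] that i by auto
  have high: "Suc i \<le> ?s l" if "Suc i \<le> l" "l \<le> n" for l
    using cp_path_mono[OF c that] ci by auto
  have En: "Phi i n A c = (\<Prod>k\<in>{1..n}. \<integral>\<^sup>+x. (if k = ?k0 then indicator A x else 1) * (\<Prod>l\<in>{l\<in>{1..n}. ?s l = k}. ?f l x) \<partial>J)"
    unfolding Phi_def by (rule group_prod[OF Jp _ k0 _ sI hm fm]) auto
  have Ei: "Phi i i A c = (\<Prod>k\<in>{1..n}. \<integral>\<^sup>+x. (if k = ?k0 then indicator A x else 1) * (\<Prod>l\<in>{l\<in>{1..i}. ?s l = k}. ?f l x) \<partial>J)"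
    unfolding Phi_def by (rule group_prod[OF Jp _ k0 _ sI hm fm]) (use i in auto)
  have "Phi i n A c = Phi i i A c * Kf i c"
    unfolding En Ei Kf_def prod.distrib[symmetric]
  proof (rule prod.cong[OF refl])
    fix k assume k: "k \<in> {1..n}"
    show "(\<integral>\<^sup>+x. (if k = ?k0 then indicator A x else 1) * (\<Prod>l\<in>{l\<in>{1..n}. ?s l = k}. ?f l x) \<partial>J)
       = (\<integral>\<^sup>+x. (if k = ?k0 then indicator A x else 1) * (\<Prod>l\<in>{l\<in>{1..i}. ?s l = k}. ?f l x) \<partial>J)
         * (\<integral>\<^sup>+x. (\<Prod>l\<in>{l\<in>{Suc i..n}. ?s l = k}. ?f l x) \<partial>J)"
    proof (cases "k \<le> i")
      case True
      have e1: "{l\<in>{1..n}. ?s l = k} = {l\<in>{1..i}. ?s l = k}"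
      proof (intro Collect_cong iffI)
        fix l assume "l \<in> {1..n} \<and> ?s l = k"
        moreover have "\<not> Suc i \<le> l" using high[of l] True calculation by auto
        ultimately show "l \<in> {1..i} \<and> ?s l = k" by simp
      next
        fix l assume "l \<in> {1..i} \<and> ?s l = k"
        then show "l \<in> {1..n} \<and> ?s l = k" using i by simp
      qed
      have e2: "{l\<in>{Suc i..n}. ?s l = k} = {}"
      proof (rule ccontr)
        assume "{l\<in>{Suc i..n}. ?s l = k} \<noteq> {}"
        then obtain l where "Suc i \<le> l" "l \<le> n" "?s l = k" by auto
        then show False using high[of l] True by simp
      qed
      show ?thesis unfolding e1 e2 by (simp add: int1 prob_space.emeasure_space_1[OF Jp])
    next
      case False
      have e1: "{l\<in>{1..n}. ?s l = k} = {l\<in>{Suc i..n}. ?s l = k}"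
      proof (intro Collect_cong iffI)
        fix l assume "l \<in> {1..n} \<and> ?s l = k"
        moreover have "\<not> l \<le> i" using low[of l] False calculation by auto
        ultimately show "l \<in> {Suc i..n} \<and> ?s l = k" by simp
      next
        fix l assume "l \<in> {Suc i..n} \<and> ?s l = k"
        then show "l \<in> {1..n} \<and> ?s l = k" by simp
      qed
      have e2: "{l\<in>{1..i}. ?s l = k} = {}"
      proof (rule ccontr)
        assume "{l\<in>{1..i}. ?s l = k} \<noteq> {}"
        then obtain l where "l \<le> i" "?s l = k" by auto
        then show False using low[of l] False by simp
      qed
      have kk: "k \<noteq> ?k0" using False low[of i] by auto
      show ?thesis unfolding e1 e2 using kk by (simp add: int1 prob_space.emeasure_space_1[OF Jp])
    qed
  qed
  then show ?thesis .
qed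

end

definition seg :: "'x measure \<Rightarrow> ('x \<Rightarrow> 'y \<Rightarrow> real) \<Rightarrow> (nat \<Rightarrow> 'y) \<Rightarrow> nat \<Rightarrow> nat \<Rightarrow> ennreal" where
  "seg J p y a b = (\<integral>\<^sup>+x. (\<Prod>l\<in>{a..b}. ennreal (p x (y l))) \<partial>J)"

locale cpm2 = cpm +
  assumes segp: "\<And>a b. 0 < a \<Longrightarrow> a \<le> b \<Longrightarrow> b \<le> n \<Longrightarrow> 0 < seg J p y a b"
    and segf: "\<And>a b. 0 < a \<Longrightarrow> a \<le> b \<Longrightarrow> b \<le> n \<Longrightarrow> seg J p y a b < \<infinity>"
begin

definition BB :: ennreal where
  "BB = 1 + (\<Sum>a\<in>{1..n}. \<Sum>b\<in>{1..n}. seg J p y a b)"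

lemma BB_fin: "BB < \<infinity>"
proof -
  have "seg J p y a b < \<infinity>" if "a \<in> {1..n}" "b \<in> {1..n}" for a b
  proof (cases "a \<le> b")
    case True then show ?thesis using segf that by auto
  next
    case False then have "{a..b} = {}" by auto
    then show ?thesis by (simp add: seg_def prob_space.emeasure_space_1[OF Jp])
  qed
  then show ?thesis unfolding BB_def by (simp add: less_top[symmetric])
qed

lemma seg_le_BB: "a \<in> {1..n} \<Longrightarrow> b \<in> {1..n} \<Longrightarrow> seg J p y a b \<le> BB"
proof -
  assume a: "a \<in> {1..n}" and b: "b \<in> {1..n}"
  have "seg J p y a b \<le> (\<Sum>b\<in>{1..n}. seg J p y a b)"
    using b by (intro member_le_sum) auto
  also have "\<dots> \<le> (\<Sum>a\<in>{1..n}. \<Sum>b\<in>{1..n}. seg J p y a b)"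
    using a by (intro member_le_sum[where f="\<lambda>a. \<Sum>b\<in>{1..n}. seg J p y a b"]) auto
  also have "\<dots> \<le> BB" unfolding BB_def by simp
  finally show ?thesis .
qed

lemma group_interval:
  fixes c :: "nat \<Rightarrow> nat"
  assumes ci: "c (Suc i) = Suc i"
    and st: "\<And>l. Suc i \<le> l \<Longrightarrow> l < n \<Longrightarrow> c (Suc l) = c l \<or> c (Suc l) = Suc l"
  shows "{l\<in>{Suc i..n}. max 1 (c l) = k} = {} \<or>
         (\<exists>a b. 0 < a \<and> a \<le> b \<and> b \<le> n \<and> {l\<in>{Suc i..n}. max 1 (c l) = k} = {a..b})"
proof -
  have mono: "c a \<le> c b" if "Suc i \<le> a" "a \<le> b" "b \<le> n" for a b
    using that(2,3)
  proof (induction b rule: dec_induct)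
    case base then show ?case by simp
  next
    case (step b)
    have "c (Suc b) = c b \<or> c (Suc b) = Suc b" using st[of b] step that(1) by simp
    moreover have "c b \<le> b"
    proof -
      have "c l \<le> l" if "Suc i \<le> l" "l \<le> n" for l
        using that
      proof (induction l rule: dec_induct)
        case base then show ?case using ci by simp
      next
        case (step l)
        then have "c (Suc l) = c l \<or> c (Suc l) = Suc l" using st[of l] by simp
        then show ?case using step by auto
      qed
      then show ?thesis using step that by simp
    qed
    ultimately show ?case using step by auto
  qed
  have ge: "Suc i \<le> c l" if "Suc i \<le> l" "l \<le> n" for l
    using mono[of "Suc i" l] that ci by simp
  let ?G = "{l\<in>{Suc i..n}. max 1 (c l) = k}"
  show ?thesis
  proof (cases "?G = {}")
    case True then show ?thesis by simp
  next
    case False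
    have fin: "finite ?G" by simp
    let ?a = "Min ?G" and ?b = "Max ?G"
    have aG: "?a \<in> ?G" using Min_in[OF fin False] .
    have bG: "?b \<in> ?G" using Max_in[OF fin False] .
    have "?G = {?a..?b}"
    proof
      show "?G \<subseteq> {?a..?b}" using fin by auto
    next
      show "{?a..?b} \<subseteq> ?G"
      proof
        fix l assume l: "l \<in> {?a..?b}"
        have r: "Suc i \<le> l" "l \<le> n" using l aG bG by auto
        have "c ?a \<le> c l" using mono[of ?a l] l aG r by auto
        moreover have "c l \<le> c ?b" using mono[of l ?b] l bG r by auto
        moreover have "c ?a = k" "c ?b = k" using aG bG ge[of ?a] ge[of ?b] by auto
        ultimately have "c l = k" by simp
        then show "l \<in> ?G" using r ge[of l] by auto
      qed
    qed
    moreover have "0 < ?a" "?a \<le> ?b" "?b \<le> n" using aG bG fin by auto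
    ultimately show ?thesis by blast
  qed
qed

lemma Kf_bounds:
  fixes c :: "nat \<Rightarrow> nat"
  assumes ci: "c (Suc i) = Suc i"
    and st: "\<And>l. Suc i \<le> l \<Longrightarrow> l < n \<Longrightarrow> c (Suc l) = c l \<or> c (Suc l) = Suc l"
  shows "Kf i c \<noteq> 0" "Kf i c \<le> BB ^ n"
proof -
  let ?F = "\<lambda>k. \<integral>\<^sup>+x. (\<Prod>l\<in>{l\<in>{Suc i..n}. max 1 (c l) = k}. ennreal (p x (y l))) \<partial>J"
  have F: "?F k \<noteq> 0 \<and> ?F k \<le> BB" for k
  proof -
    from group_interval[OF ci st, of k]
    show ?thesis
    proof
      assume e: "{l\<in>{Suc i..n}. max 1 (c l) = k} = {}"
      have "?F k = 1" unfolding e by (simp add: prob_space.emeasure_space_1[OF Jp])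
      then show ?thesis unfolding BB_def by simp
    next
      assume "\<exists>a b. 0 < a \<and> a \<le> b \<and> b \<le> n \<and> {l\<in>{Suc i..n}. max 1 (c l) = k} = {a..b}"
      then obtain a b where ab: "0 < a" "a \<le> b" "b \<le> n" "{l\<in>{Suc i..n}. max 1 (c l) = k} = {a..b}"
        by blast
      have "?F k = seg J p y a b" unfolding ab(4) seg_def ..
      moreover have "0 < seg J p y a b" using segp ab by simp
      moreover have "seg J p y a b \<le> BB" using ab by (intro seg_le_BB) auto
      ultimately show ?thesis by simp
    qed
  qed
  show "Kf i c \<noteq> 0" unfolding Kf_def using F by simp
  have "Kf i c \<le> (\<Prod>k\<in>{1..n}. BB)" unfolding Kf_def using F by (intro prod_mono_ennreal) simp
  then show "Kf i c \<le> BB ^ n" by simp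
qed

lemma T0_bounds:
  assumes "i < n"
  shows "T0 q i n (Kf i) \<noteq> 0" "T0 q i n (Kf i) < \<infinity>"
proof -
  let ?M = "cext q (Suc i) (n - Suc i) (\<lambda>_. Suc i)"
  have supp: "Kf i c \<noteq> 0 \<and> Kf i c \<le> BB ^ n" if c: "c \<in> set_pmf ?M" for c
  proof -
    note S = set_cext[OF c]
    have ci: "c (Suc i) = Suc i" using S by simp
    have st: "c (Suc l) = c l \<or> c (Suc l) = Suc l" if "Suc i \<le> l" "l < n" for l
      using S that assms by auto
    show ?thesis using Kf_bounds[OF ci st] by blast
  qed
  have "T0 q i n (Kf i) \<le> (\<integral>\<^sup>+c. BB ^ n \<partial>measure_pmf ?M)"
    unfolding T0_def by (rule nn_integral_mono_AE) (simp add: AE_measure_pmf_iff supp)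
  also have "\<dots> = BB ^ n" by (simp add: measure_pmf.emeasure_space_1)
  also have "\<dots> < \<infinity>" using BB_fin by (simp add: power_less_top_ennreal)
  finally show "T0 q i n (Kf i) < \<infinity>" .
  show "T0 q i n (Kf i) \<noteq> 0"
  proof
    assume "T0 q i n (Kf i) = 0"
    then have "AE c in measure_pmf ?M. Kf i c = 0"
      unfolding T0_def by (subst (asm) nn_integral_0_iff_AE) simp_all
    then have "\<forall>c\<in>set_pmf ?M. Kf i c = 0" by (simp add: AE_measure_pmf_iff)
    moreover obtain c where "c \<in> set_pmf ?M" using set_pmf_not_empty[of ?M] by blast
    ultimately show False using supp by blast
  qed
qed

end

lemma div_cancel_ennreal:
  fixes W a b :: ennreal
  assumes "W \<noteq> 0" "W < \<infinity>"
  shows "(W * a) / (W * b) = a / b"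
proof -
  have "inverse (W * b) = inverse W * inverse b"
    using assms by (intro ennreal_inverse_mult') (auto simp: zero_less_iff_neq_zero)
  then have "(W * a) / (W * b) = (W / W) * (a / b)"
    by (simp add: divide_ennreal_def mult_ac)
  also have "W / W = 1" using assms by simp
  finally show ?thesis by simp
qed

context cpm
begin

lemma cpX_meas: "(\<lambda>\<omega>. cpX l \<omega>) \<in> measurable (measure_pmf P \<Otimes>\<^sub>M PI) J"
  unfolding cpX_def
proof (rule measurable_compose_countable'[where f="\<lambda>k \<omega>. snd \<omega> k" and g="\<lambda>\<omega>. max 1 (fst \<omega> l)" and I=UNIV])
  fix k :: nat
  show "(\<lambda>\<omega>. snd \<omega> k) \<in> measurable (measure_pmf P \<Otimes>\<^sub>M PI) J"
  proof (cases "k \<in> {1..n}")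
    case True
    then show ?thesis
      by (rule measurable_compose[OF measurable_snd measurable_component_singleton])
  next
    case False
    have u: "snd \<omega> k = undefined" if "\<omega> \<in> space (measure_pmf P \<Otimes>\<^sub>M PI)" for \<omega>
    proof -
      from that have "snd \<omega> \<in> space PI" unfolding space_pair_measure by (simp add: mem_Times_iff)
      then have "snd \<omega> \<in> PiE {1..n} (\<lambda>_. space J)" by (simp only: space_PiM)
      then show ?thesis using False by (rule PiE_arb)
    qed
    have c: "(\<lambda>\<omega>. undefined) \<in> measurable (measure_pmf P \<Otimes>\<^sub>M PI) J"
      by (rule measurable_const) (simp add: Jsp)
    show ?thesis
      by (rule measurable_cong[THEN iffD2, OF _ c]) (rule u)
  qed
next
  show "(\<lambda>\<omega>. max 1 (fst \<omega> l)) \<in> measurable (measure_pmf P \<Otimes>\<^sub>M PI) (count_space UNIV)"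
    by (rule measurable_compose[OF measurable_fst]) simp
qed simp

lemma L_model:
  assumes A: "A \<in> sets J"
  shows "(\<integral>\<^sup>+\<omega>. indicator Ec (fst \<omega>) * (indicator A (cpX i \<omega>) * cp_lik p y m \<omega>) \<partial>(measure_pmf P \<Otimes>\<^sub>M PI))
       = (\<integral>\<^sup>+c. indicator Ec c * Phi i m A c \<partial>measure_pmf P)"
proof -
  interpret PIsf: sigma_finite_measure PI
    by (intro prob_space_imp_sigma_finite prob_space_PiM Jp)
  have m1: "(\<lambda>\<omega>. indicator Ec (fst \<omega>) :: ennreal) \<in> borel_measurable (measure_pmf P \<Otimes>\<^sub>M PI)"
    by (rule measurable_compose[OF measurable_fst]) simp
  have m2: "(\<lambda>\<omega>. indicator A (cpX i \<omega>) :: ennreal) \<in> borel_measurable (measure_pmf P \<Otimes>\<^sub>M PI)"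
    by (rule measurable_compose[OF cpX_meas borel_measurable_indicator[OF A]])
  have m3: "(\<lambda>\<omega>. ennreal (p (cpX l \<omega>) (y l))) \<in> borel_measurable (measure_pmf P \<Otimes>\<^sub>M PI)" for l
    by (rule measurable_compose[OF cpX_meas fm])
  have m4: "(\<lambda>\<omega>. cp_lik p y m \<omega>) \<in> borel_measurable (measure_pmf P \<Otimes>\<^sub>M PI)"
    unfolding cp_lik_def by (intro borel_measurable_prod_ennreal m3)
  have meas: "(\<lambda>\<omega>. indicator Ec (fst \<omega>) * (indicator A (cpX i \<omega>) * cp_lik p y m \<omega>)) \<in> borel_measurable (measure_pmf P \<Otimes>\<^sub>M PI)"
    using borel_measurable_times_ennreal[OF m1 borel_measurable_times_ennreal[OF m2 m4]] by simp
  have "(\<integral>\<^sup>+\<omega>. indicator Ec (fst \<omega>) * (indicator A (cpX i \<omega>) * cp_lik p y m \<omega>) \<partial>(measure_pmf P \<Otimes>\<^sub>M PI))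
     = (\<integral>\<^sup>+c. \<integral>\<^sup>+z. indicator Ec (fst (c, z)) * (indicator A (cpX i (c, z)) * cp_lik p y m (c, z)) \<partial>PI \<partial>measure_pmf P)"
    by (rule PIsf.nn_integral_fst[OF meas, symmetric])
  also have "\<dots> = (\<integral>\<^sup>+c. indicator Ec c * Phi i m A c \<partial>measure_pmf P)"
  proof (rule nn_integral_cong)
    fix c
    show "(\<integral>\<^sup>+z. indicator Ec (fst (c, z)) * (indicator A (cpX i (c, z)) * cp_lik p y m (c, z)) \<partial>PI)
        = indicator Ec c * Phi i m A c"
      by (cases "c \<in> Ec") (simp_all add: Phi_def cpX_def cp_lik_def)
  qed
  finally show ?thesis .
qed

end

theorem mainTheorem8:
  fixes J :: "'x::polish_space measure" and \<psi> :: "'y::polish_space measure"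
    and p :: "'x \<Rightarrow> 'y \<Rightarrow> real" and q :: "nat \<Rightarrow> nat \<Rightarrow> real"
    and y :: "nat \<Rightarrow> 'y" and n :: nat
  assumes n_pos: "1 \<le> n"
    and J_prob: "prob_space J" and J_sets: "sets J = sets borel"
    and psi_sf: "sigma_finite_measure \<psi>" and psi_sets: "sets \<psi> = sets borel"
    and q_range: "\<forall>j i. j < i \<and> i \<le> n \<longrightarrow> 0 \<le> q j i \<and> q j i \<le> 1"
    and p_meas: "(\<lambda>(x, v). p x v) \<in> borel_measurable (J \<Otimes>\<^sub>M \<psi>)"
    and p_nonneg: "\<forall>x v. 0 \<le> p x v"
    and p_density: "\<forall>x. (\<integral>\<^sup>+v. ennreal (p x v) \<partial>\<psi>) = 1"
    and seg_pos: "\<forall>j i. 0 < j \<and> j \<le> i \<and> i \<le> n \<longrightarrow>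
                    0 < (\<integral>\<^sup>+x. (\<Prod>l\<in>{j..i}. ennreal (p x (y l))) \<partial>J)"
    and seg_fin: "\<forall>j i. 0 < j \<and> j \<le> i \<and> i \<le> n \<longrightarrow>
                    (\<integral>\<^sup>+x. (\<Prod>l\<in>{j..i}. ennreal (p x (y l))) \<partial>J) < \<infinity>"
  shows "(\<forall>i j. 0 < i \<and> i < n \<and> j \<le> i \<and>
            0 < measure_pmf.prob (cp_path q n) {c. c i = j \<and> c (Suc i) = Suc i} \<longrightarrow>
            (\<forall>A \<in> sets J.
               cp_post (cp_model q J n) (cp_lik p y n)
                 {\<omega>. cpC i \<omega> = j \<and> cpC (Suc i) \<omega> = Suc i} {\<omega>. cpX i \<omega> \<in> A}
             = cp_post (cp_model q J n) (cp_lik p y i)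
                 {\<omega>. cpC i \<omega> = j} {\<omega>. cpX i \<omega> \<in> A}))
       \<and> (\<forall>j. j \<le> n \<and> 0 < measure_pmf.prob (cp_path q n) {c. c n = j} \<longrightarrow>
            (\<forall>A \<in> sets J.
               cp_post (cp_model q J n) (cp_lik p y n) {\<omega>. cpC n \<omega> = j} {\<omega>. cpX n \<omega> \<in> A}
             = cp_post (cp_model q J n) (cp_lik p y n) {\<omega>. cpC n \<omega> = j} {\<omega>. cpX n \<omega> \<in> A}))"
proof -
  have Jsp: "space J = UNIV" using sets_eq_imp_space_eq[OF J_sets] by simp
  have psp: "space \<psi> = UNIV" using sets_eq_imp_space_eq[OF psi_sets] by simp
  have pm: "(\<lambda>x. p x v) \<in> borel_measurable J" for v
    using measurable_compose[OF measurable_Pair2'[of v \<psi> J] p_meas] psp by simp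
  have c1: "cpm J p" unfolding cpm_def using J_prob Jsp pm by blast
  have c2: "cpm2_axioms J p y n" unfolding cpm2_axioms_def seg_def using seg_pos seg_fin by blast
  interpret cpm2 J p y n by (rule cpm2.intro[OF c1 c2])
  have part1: "cp_post (cp_model q J n) (cp_lik p y n)
                 {\<omega>. cpC i \<omega> = j \<and> cpC (Suc i) \<omega> = Suc i} {\<omega>. cpX i \<omega> \<in> A}
             = cp_post (cp_model q J n) (cp_lik p y i)
                 {\<omega>. cpC i \<omega> = j} {\<omega>. cpX i \<omega> \<in> A}"
    if H: "0 < i \<and> i < n \<and> j \<le> i \<and>
            0 < measure_pmf.prob (cp_path q n) {c. c i = j \<and> c (Suc i) = Suc i}"
       and A: "A \<in> sets J" for i j A
  proof -
    from H have i: "0 < i" "i < n" and j: "j \<le> i"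
      and pr: "0 < measure_pmf.prob (cp_path q n) {c. c i = j \<and> c (Suc i) = Suc i}" by auto
    have qr: "0 \<le> q j (Suc i)" "q j (Suc i) \<le> 1" using q_range j i by auto
    let ?Ec = "{c. c i = j \<and> c (Suc i) = Suc i}"
    let ?Er = "{c::nat\<Rightarrow>nat. c i = j}"
    let ?W = "ennreal (1 - q j (Suc i)) * T0 q i n (Kf i)"
    have NL: "(\<integral>\<^sup>+\<omega>. indicator ({\<omega>. cpC i \<omega> = j \<and> cpC (Suc i) \<omega> = Suc i} \<inter> {\<omega>. cpX i \<omega> \<in> A'}) \<omega> * cp_lik p y n \<omega> \<partial>cp_model q J n)
        = ?W * (\<integral>\<^sup>+c. indicator ?Er c * Phi i i A' c \<partial>measure_pmf (cp_path q i))"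
      if A': "A' \<in> sets J" for A'
    proof -
      have "(\<integral>\<^sup>+\<omega>. indicator ({\<omega>. cpC i \<omega> = j \<and> cpC (Suc i) \<omega> = Suc i} \<inter> {\<omega>. cpX i \<omega> \<in> A'}) \<omega> * cp_lik p y n \<omega> \<partial>cp_model q J n)
          = (\<integral>\<^sup>+\<omega>. indicator ?Ec (fst \<omega>) * (indicator A' (cpX i \<omega>) * cp_lik p y n \<omega>) \<partial>(measure_pmf (cp_path q n) \<Otimes>\<^sub>M PI))"
        unfolding cp_model_def by (intro nn_integral_cong) (auto simp: indicator_def cpC_def)
      also have "\<dots> = (\<integral>\<^sup>+c. indicator ?Ec c * Phi i n A' c \<partial>measure_pmf (cp_path q n))"
        by (rule L_model[OF A'])
      also have "\<dots> = (\<integral>\<^sup>+c. indicator ?Ec c * Phi i i A' c * Kf i c \<partial>measure_pmf (cp_path q n))"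
      proof (rule nn_integral_cong_AE, unfold AE_measure_pmf_iff, intro ballI)
        fix c assume c: "c \<in> set_pmf (cp_path q n)"
        show "indicator ?Ec c * Phi i n A' c = indicator ?Ec c * Phi i i A' c * Kf i c"
        proof (cases "c \<in> ?Ec")
          case True
          then have "c (Suc i) = Suc i" by simp
          from Fac[OF c i this A'] show ?thesis by (simp add: mult.assoc)
        next
          case False then show ?thesis by simp
        qed
      qed
      also have "\<dots> = ?W * (\<integral>\<^sup>+c. indicator ?Er c * Phi i i A' c \<partial>measure_pmf (cp_path q i))"
        by (rule lemmaM[where i=i and n=n and j=j and q=q and Phi="Phi i i A'" and K="Kf i", OF i j qr])
          (auto intro: Phi_dep Kf_dep)
      finally show ?thesis .
    qed
    have NR: "(\<integral>\<^sup>+\<omega>. indicator ({\<omega>. cpC i \<omega> = j} \<inter> {\<omega>. cpX i \<omega> \<in> A'}) \<omega> * cp_lik p y i \<omega> \<partial>cp_model q J n)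
        = (\<integral>\<^sup>+c. indicator ?Er c * Phi i i A' c \<partial>measure_pmf (cp_path q i))"
      if A': "A' \<in> sets J" for A'
    proof -
      have "(\<integral>\<^sup>+\<omega>. indicator ({\<omega>. cpC i \<omega> = j} \<inter> {\<omega>. cpX i \<omega> \<in> A'}) \<omega> * cp_lik p y i \<omega> \<partial>cp_model q J n)
          = (\<integral>\<^sup>+\<omega>. indicator ?Er (fst \<omega>) * (indicator A' (cpX i \<omega>) * cp_lik p y i \<omega>) \<partial>(measure_pmf (cp_path q n) \<Otimes>\<^sub>M PI))"
        unfolding cp_model_def by (intro nn_integral_cong) (auto simp: indicator_def cpC_def)
      also have "\<dots> = (\<integral>\<^sup>+c. indicator ?Er c * Phi i i A' c \<partial>measure_pmf (cp_path q n))"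
        by (rule L_model[OF A'])
      also have "\<dots> = (\<integral>\<^sup>+c. indicator ?Er c * Phi i i A' c \<partial>measure_pmf (cp_path q i))"
      proof (rule lemmaR)
        show "i \<le> n" using i by simp
      next
        fix c c' :: "nat \<Rightarrow> nat" assume a: "\<forall>l\<le>i. c l = c' l"
        then have "Phi i i A' c = Phi i i A' c'" by (rule Phi_dep)
        moreover have "c i = c' i" using a by simp
        ultimately show "indicator ?Er c * Phi i i A' c = indicator ?Er c' * Phi i i A' c'"
          by (simp add: indicator_def)
      qed
      finally show ?thesis .
    qed
    have UNIV_J: "UNIV \<in> sets J" using Jsp sets.top[of J] by simp
    have e1: "{\<omega>. cpC i \<omega> = j \<and> cpC (Suc i) \<omega> = Suc i} = {\<omega>. cpC i \<omega> = j \<and> cpC (Suc i) \<omega> = Suc i} \<inter> {\<omega>. cpX i \<omega> \<in> UNIV}"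
      by simp
    have e2: "{\<omega>. cpC i \<omega> = j} = {\<omega>. cpC i \<omega> = j} \<inter> {\<omega>. cpX i \<omega> \<in> UNIV}"
      by simp
    have q1: "q j (Suc i) < 1"
    proof (rule ccontr)
      assume "\<not> q j (Suc i) < 1"
      then have "1 - q j (Suc i) \<le> 0" by simp
      then have z: "ennreal (1 - q j (Suc i)) = 0" by (simp add: ennreal_eq_0_iff)
      have "emeasure (measure_pmf (cp_path q n)) ?Ec = (\<integral>\<^sup>+c. indicator ?Ec c * 1 * 1 \<partial>measure_pmf (cp_path q n))"
        by (simp add: nn_integral_indicator)
      also have "\<dots> = ennreal (1 - q j (Suc i)) * T0 q i n (\<lambda>_. 1) * (\<integral>\<^sup>+c. indicator ?Er c * 1 \<partial>measure_pmf (cp_path q i))"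
        by (rule lemmaM[where i=i and n=n and j=j and q=q and Phi="\<lambda>_. 1" and K="\<lambda>_. 1", OF i j qr]) simp_all
      also have "\<dots> = 0" using z by simp
      finally have "emeasure (measure_pmf (cp_path q n)) ?Ec = 0" .
      then have "measure_pmf.prob (cp_path q n) ?Ec = 0"
        by (simp add: measure_pmf.emeasure_eq_measure)
      then show False using pr by simp
    qed
    have W0: "?W \<noteq> 0" using q1 T0_bounds(1)[OF i(2)] by simp
    have Wf: "?W < \<infinity>" using T0_bounds(2)[OF i(2)] by (simp add: ennreal_mult_less_top)
    show ?thesis
      unfolding cp_post_def
      apply (subst (2) e1, subst (2) e2)
      unfolding NL[OF A] NL[OF UNIV_J] NR[OF A] NR[OF UNIV_J]
      by (rule div_cancel_ennreal[OF W0 Wf])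
  qed
  show ?thesis
    using part1 by blast
qed

end
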